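(* Let $k$ be a field of characteristic zero, ${\boldsymbol\lambda}\in M_n(k)$ antisymmetric, $A=k_{\boldsymbol\lambda}[x_1,\dots,x_n]$, and let $P$ be a Poisson prime ideal of $A$. Then there exist a field extension $K\supseteq k$ and an antisymmetric matrix ${\boldsymbol\mu}\in M_m(k)$, for some $m\le n$, such that $\operatorname{Fract}A/P\cong K_{\boldsymbol\mu}(y_1,\dots,y_m)$ as Poisson algebras. Moreover, ${\boldsymbol\mu}$ is the upper left $m\times m$ submatrix of ${\boldsymbol\sigma}{\boldsymbol\lambda}{\boldsymbol\sigma}^{\mathrm{tr}}$ for some ${\boldsymbol\sigma}\in GL_n(\mathbb Z)$.
   Context: For an antisymmetric matrix ${\boldsymbol\lambda}=(\lambda_{ij})\in M_n(k)$, $k_{\boldsymbol\lambda}[x_1,\dots,x_n]$ denotes the polynomial algebra with the unique Poisson bracket satisfying $\{x_i,x_j\}=\lambda_{ij}x_ix_j$ for all $i,j$. For a field $K\supseteq k$ and antisymmetric ${\boldsymbol\mu}\in M_m(k)$, $K_{\boldsymbol\mu}(y_1,\dots,y_m)$ denotes the rational function field over $K$ with the unique $K$-linear Poisson bracket satisfying $\{y_i,y_j\}=\mu_{ij}y_iy_j$. A Poisson prime ideal is a prime ideal $P$ with $\{A,P\}\subseteq P$; the bracket on $A/P$ extends uniquely to $\operatorname{Fract}A/P$. *)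

theory Defs
  imports "HOL-Library.Poly_Mapping"
begin

text \<open>Multivariate polynomials with coefficients in 'a, in the variables x_0, x_1, ...:
  a monomial is an exponent vector (finitely supported nat => nat), a polynomial a finitely supported
  coefficient function on monomials (convolution product = polynomial product).\<close>
type_synonym 'a mpoly = "(nat \<Rightarrow>\<^sub>0 nat) \<Rightarrow>\<^sub>0 'a"

definition mconst :: "'a::zero \<Rightarrow> 'a mpoly" where
  "mconst c = Poly_Mapping.single 0 c"

definition mvar :: "nat \<Rightarrow> 'a::{zero,one} mpoly" where
  "mvar i = Poly_Mapping.single (Poly_Mapping.single i 1) 1"

text \<open>Polynomials in the variables x_0,...,x_{n-1} (i.e. k[x_1,...,x_n]).\<close>
definition polys_in :: "nat \<Rightarrow> 'a::zero mpoly set" where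
  "polys_in n = {p. \<forall>mo\<in>Poly_Mapping.keys p. Poly_Mapping.keys mo \<subseteq> {..<n}}"

definition polys_over :: "'a::zero set \<Rightarrow> nat \<Rightarrow> 'a mpoly set" where
  "polys_over S m = {p \<in> polys_in m. \<forall>mo. Poly_Mapping.lookup p mo \<in> S}"

definition mpderiv :: "nat \<Rightarrow> 'a::comm_ring_1 mpoly \<Rightarrow> 'a mpoly" where
  "mpderiv i p = (\<Sum>mo\<in>Poly_Mapping.keys p.
      Poly_Mapping.single (mo - Poly_Mapping.single i 1) (of_nat (Poly_Mapping.lookup mo i) * Poly_Mapping.lookup p mo))"

text \<open>The Poisson bracket of k_lambda[x_1,...,x_n]:
  {f,g} = sum_{i,j} lambda_ij x_i x_j (d f/d x_i) (d g/d x_j), the unique Poisson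
  bracket with {x_i,x_j} = lambda_ij x_i x_j.\<close>
definition qbracket :: "nat \<Rightarrow> (nat \<Rightarrow> nat \<Rightarrow> 'a::comm_ring_1) \<Rightarrow> 'a mpoly \<Rightarrow> 'a mpoly \<Rightarrow> 'a mpoly" where
  "qbracket n lam f g = (\<Sum>i<n. \<Sum>j<n.
      mconst (lam i j) * mvar i * mvar j * mpderiv i f * mpderiv j g)"

definition antisym_mat :: "nat \<Rightarrow> (nat \<Rightarrow> nat \<Rightarrow> 'a::ab_group_add) \<Rightarrow> bool" where
  "antisym_mat n M \<longleftrightarrow> (\<forall>i<n. \<forall>j<n. M i j = - M j i)"

definition prime_ideal_in :: "'a::comm_ring_1 set \<Rightarrow> 'a set \<Rightarrow> bool" where
  "prime_ideal_in A P \<longleftrightarrow> P \<subseteq> A \<and> 0 \<in> P \<and> (\<forall>a\<in>P. \<forall>b\<in>P. a + b \<in> P \<and> - a \<in> P)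
     \<and> (\<forall>a\<in>A. \<forall>b\<in>P. a * b \<in> P) \<and> 1 \<notin> P
     \<and> (\<forall>a\<in>A. \<forall>b\<in>A. a * b \<in> P \<longrightarrow> a \<in> P \<or> b \<in> P)"

definition poisson_prime :: "nat \<Rightarrow> (nat \<Rightarrow> nat \<Rightarrow> 'a::comm_ring_1) \<Rightarrow> 'a mpoly set \<Rightarrow> bool" where
  "poisson_prime n lam P \<longleftrightarrow> prime_ideal_in (polys_in n) P
     \<and> (\<forall>a\<in>polys_in n. \<forall>b\<in>P. qbracket n lam a b \<in> P)"

definition poisson_bracket :: "('f::field \<Rightarrow> 'f \<Rightarrow> 'f) \<Rightarrow> bool" where
  "poisson_bracket br \<longleftrightarrow>
     (\<forall>a b. br a b = - br b a)
   \<and> (\<forall>a b c. br (a + b) c = br a c + br b c)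
   \<and> (\<forall>a b c. br (a * b) c = a * br b c + b * br a c)
   \<and> (\<forall>a b c. br a (br b c) + br b (br c a) + br c (br a b) = 0)"

text \<open>(F, phi, br) is a model of the Poisson field Fract(A/P), A = k_lambda[x_1..x_n]:
  phi : A -> F is a ring homomorphism with kernel P, F is the field of fractions of
  its image, and br is a Poisson bracket on F extending (via phi) that of A.\<close>
definition is_poisson_fract_quot ::
  "nat \<Rightarrow> (nat \<Rightarrow> nat \<Rightarrow> 'k::field) \<Rightarrow> 'k mpoly set \<Rightarrow> ('k mpoly \<Rightarrow> 'f::field)
     \<Rightarrow> ('f \<Rightarrow> 'f \<Rightarrow> 'f) \<Rightarrow> bool" where
  "is_poisson_fract_quot n lam P phi br \<longleftrightarrow>
     (\<forall>a\<in>polys_in n. \<forall>b\<in>polys_in n. phi (a + b) = phi a + phi b \<and> phi (a * b) = phi a * phi b)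
   \<and> phi 1 = 1
   \<and> (\<forall>a\<in>polys_in n. phi a = 0 \<longleftrightarrow> a \<in> P)
   \<and> (\<forall>z. \<exists>a\<in>polys_in n. \<exists>b\<in>polys_in n. b \<notin> P \<and> z = phi a / phi b)
   \<and> poisson_bracket br
   \<and> (\<forall>a\<in>polys_in n. \<forall>b\<in>polys_in n. br (phi a) (phi b) = phi (qbracket n lam a b))"

definition subfield :: "'f::field set \<Rightarrow> bool" where
  "subfield K \<longleftrightarrow> 0 \<in> K \<and> 1 \<in> K \<and> (\<forall>a\<in>K. \<forall>b\<in>K. a + b \<in> K \<and> a * b \<in> K)
     \<and> (\<forall>a\<in>K. - a \<in> K \<and> inverse a \<in> K)"

definition meval :: "(nat \<Rightarrow> 'a::comm_ring_1) \<Rightarrow> 'a mpoly \<Rightarrow> 'a" where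
  "meval y p = (\<Sum>mo\<in>Poly_Mapping.keys p. Poly_Mapping.lookup p mo * (\<Prod>i\<in>Poly_Mapping.keys mo. y i ^ Poly_Mapping.lookup mo i))"

definition GL_int :: "nat \<Rightarrow> (nat \<Rightarrow> nat \<Rightarrow> int) \<Rightarrow> bool" where
  "GL_int n s \<longleftrightarrow> (\<exists>t. \<forall>i<n. \<forall>j<n.
      (\<Sum>l<n. s i l * t l j) = (if i = j then 1 else 0)
    \<and> (\<Sum>l<n. t i l * s l j) = (if i = j then 1 else 0))"

definition conj_mat :: "nat \<Rightarrow> (nat \<Rightarrow> nat \<Rightarrow> int) \<Rightarrow> (nat \<Rightarrow> nat \<Rightarrow> 'a::comm_ring_1) \<Rightarrow> nat \<Rightarrow> nat \<Rightarrow> 'a" where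
  "conj_mat n s lam i j = (\<Sum>a<n. \<Sum>b<n. of_int (s i a) * lam a b * of_int (s j b))"

text \<open>(F, br) is isomorphic as a Poisson algebra to K_mu(y_1,...,y_m), realized inside F:
  K is a subfield of F containing (the image of) k on which the bracket vanishes
  (the bracket is K-linear), y_1..y_m are algebraically independent over K and generate F
  as a field over K, and {y_i, y_j} = mu_ij y_i y_j.\<close>
definition is_quantum_rat_field ::
  "('k::field \<Rightarrow> 'f::field) \<Rightarrow> ('f \<Rightarrow> 'f \<Rightarrow> 'f) \<Rightarrow> nat \<Rightarrow> (nat \<Rightarrow> nat \<Rightarrow> 'k) \<Rightarrow> bool" where
  "is_quantum_rat_field emb br m mu \<longleftrightarrow>
    (\<exists>K y. subfield K \<and> range emb \<subseteq> K
       \<and> (\<forall>a\<in>K. \<forall>z. br a z = 0)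
       \<and> (\<forall>p\<in>polys_over K m. meval y p = 0 \<longrightarrow> p = 0)
       \<and> (\<forall>z. \<exists>p\<in>polys_over K m. \<exists>q\<in>polys_over K m. meval y q \<noteq> 0 \<and> z = meval y p / meval y q)
       \<and> (\<forall>i<m. \<forall>j<m. br (y i) (y j) = emb (mu i j) * y i * y j))"

end

theory Submission
  imports Defs
begin



locale pfield =
  fixes br :: "'f::field \<Rightarrow> 'f \<Rightarrow> 'f"
  assumes pb: "poisson_bracket br"
begin

lemma anti: "br a b = - br b a" using pb unfolding poisson_bracket_def by blast
lemma addl: "br (a + b) c = br a c + br b c" using pb unfolding poisson_bracket_def by blast
lemma leib: "br (a * b) c = a * br b c + b * br a c" using pb unfolding poisson_bracket_def by blast

lemma zerol[simp]: "br 0 c = 0"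
  using addl[of 0 0 c] by (metis add.right_neutral add_left_cancel)
lemma zeror[simp]: "br c 0 = 0"
  using anti[of c 0] by simp
lemma onel[simp]: "br 1 c = 0"
  using leib[of 1 1 c] by (metis add.right_neutral add_left_cancel mult_1 mult_1_right)
lemma oner[simp]: "br c 1 = 0"
  using anti[of c 1] by simp
lemma negl: "br (- a) c = - br a c"
  using addl[of a "-a" c] by (metis add.commute add.right_inverse add_eq_0_iff zerol)
lemma addr: "br c (a + b) = br c a + br c b"
  using anti[of c "a+b"] anti[of c a] anti[of c b] addl[of a b c] by simp
lemma leibr: "br c (a * b) = a * br c b + b * br c a"
  using anti[of c "a*b"] anti[of c a] anti[of c b] leib[of a b c] by (simp add: algebra_simps)
lemma sumr: "br c (sum f S) = (\<Sum>i\<in>S. br c (f i))"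
  by (induction S rule: infinite_finite_induct) (auto simp: addr)

lemma invl: "br (inverse a) c = - br a c / a^2"
proof (cases "a = 0")
  case False
  have "br (a * inverse a) c = 0" using False by simp
  hence "a * br (inverse a) c + inverse a * br a c = 0" by (simp only: leib)
  hence "a * br (inverse a) c = - (inverse a * br a c)" by (simp add: eq_neg_iff_add_eq_0)
  hence "inverse a * (a * br (inverse a) c) = inverse a * (- (inverse a * br a c))" by simp
  hence "br (inverse a) c = - (inverse a * inverse a * br a c)" using False
    by (simp add: mult.assoc[symmetric])
  thus ?thesis using False by (simp add: power2_eq_square divide_inverse mult.commute)
qed simp

definition ld where "ld a z = br a z / a"

lemma br_ld: "br a z = a * ld a z"
  by (cases "a = 0") (auto simp: ld_def)

lemma ld_one[simp]: "ld 1 z = 0" by (simp add: ld_def)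

lemma ld_mult: "a \<noteq> 0 \<Longrightarrow> b \<noteq> 0 \<Longrightarrow> ld (a * b) z = ld a z + ld b z"
  by (simp add: ld_def leib field_simps)

lemma ld_inverse: "a \<noteq> 0 \<Longrightarrow> ld (inverse a) z = - ld a z"
  unfolding ld_def invl by (simp add: power2_eq_square divide_inverse)

lemma ld_power: "a \<noteq> 0 \<Longrightarrow> ld (a ^ k) z = of_nat k * ld a z"
  by (induction k) (auto simp: ld_mult algebra_simps)

lemma ld_powi: "a \<noteq> 0 \<Longrightarrow> ld (a powi k) z = of_int k * ld a z"
  by (cases "k \<ge> 0") (auto simp: power_int_def ld_power ld_inverse)

lemma ld_prod: "(\<And>i. i \<in> S \<Longrightarrow> f i \<noteq> 0) \<Longrightarrow> ld (prod f S) z = (\<Sum>i\<in>S. ld (f i) z)"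
proof (induction S rule: infinite_finite_induct)
  case (infinite A) thus ?case by (simp add: ld_def)
next
  case empty thus ?case by (simp add: ld_def)
next
  case (insert x F) thus ?case by (simp add: ld_mult)
qed

definition csub :: "'f set \<Rightarrow> bool" where
  "csub S \<longleftrightarrow> 0 \<in> S \<and> 1 \<in> S \<and> (\<forall>a\<in>S. \<forall>b\<in>S. a + b \<in> S \<and> a * b \<in> S) \<and> (\<forall>a\<in>S. - a \<in> S \<and> inverse a \<in> S)"

lemma csub_comm: "csub {z. br x z = 0}"
  unfolding csub_def
proof (intro conjI ballI)
  fix a assume "a \<in> {z. br x z = 0}"
  hence a: "br x a = 0" by simp
  show "- a \<in> {z. br x z = 0}" using a anti[of x "-a"] anti[of x a] negl[of a x] by simp
  show "inverse a \<in> {z. br x z = 0}" using a anti[of x "inverse a"] anti[of x a] invl[of a x] by simp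
qed (auto simp: addr leibr)

definition cen where "cen = {a. \<forall>z. br a z = 0}"

lemma csub_cen: "csub cen"
  unfolding csub_def cen_def by (auto simp: addl leib negl invl)

lemma subfield_cen: "subfield cen"
  using csub_cen unfolding csub_def subfield_def by blast

end



lemma pm_decomp: "(p :: 'a \<Rightarrow>\<^sub>0 'b::comm_monoid_add) = (\<Sum>mo\<in>Poly_Mapping.keys p. Poly_Mapping.single mo (Poly_Mapping.lookup p mo))"
proof (rule poly_mapping_eqI)
  fix k
  have "Poly_Mapping.lookup (\<Sum>mo\<in>Poly_Mapping.keys p. Poly_Mapping.single mo (Poly_Mapping.lookup p mo)) k
     = (\<Sum>mo\<in>Poly_Mapping.keys p. (Poly_Mapping.lookup p mo when mo = k))"
    by (simp add: lookup_sum lookup_single)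
  also have "\<dots> = Poly_Mapping.lookup p k"
    by (cases "k \<in> Poly_Mapping.keys p") (simp_all add: when_def sum.delta in_keys_iff)
  finally show "Poly_Mapping.lookup p k = Poly_Mapping.lookup (\<Sum>mo\<in>Poly_Mapping.keys p. Poly_Mapping.single mo (Poly_Mapping.lookup p mo)) k" by simp
qed

lemma keys_mult_sub: "mo \<in> Poly_Mapping.keys (p * q) \<Longrightarrow> \<exists>a b. a \<in> Poly_Mapping.keys p \<and> b \<in> Poly_Mapping.keys q \<and> mo = a + b"
  using keys_mult by blast

lemma polys_in_zero[simp]: "0 \<in> polys_in n" by (simp add: polys_in_def)
lemma polys_in_add: "p \<in> polys_in n \<Longrightarrow> q \<in> polys_in n \<Longrightarrow> p + q \<in> polys_in n"
  unfolding polys_in_def using keys_add[of p q] by blast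
lemma polys_in_mult:
  assumes "p \<in> polys_in n" "q \<in> polys_in n" shows "(p::'a::comm_semiring_1 mpoly) * q \<in> polys_in n"
  unfolding polys_in_def
proof (intro CollectI ballI)
  have a: "\<forall>mo\<in>Poly_Mapping.keys p. Poly_Mapping.keys mo \<subseteq> {..<n}"
    "\<forall>mo\<in>Poly_Mapping.keys q. Poly_Mapping.keys mo \<subseteq> {..<n}" using assms by (auto simp: polys_in_def)
  fix mo assume mo: "mo \<in> Poly_Mapping.keys (p * q)"
  then obtain x y where "x \<in> Poly_Mapping.keys p" "y \<in> Poly_Mapping.keys q" "mo = x + y"
    using keys_mult_sub by blast
  thus "Poly_Mapping.keys mo \<subseteq> {..<n}" using a(1) a(2) keys_add[of x y]
    by (metis (no_types, lifting) le_sup_iff subset_trans)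
qed
lemma polys_in_single: "Poly_Mapping.keys mo \<subseteq> {..<n} \<Longrightarrow> Poly_Mapping.single mo c \<in> polys_in n"
  unfolding polys_in_def by auto
lemma polys_in_mconst[simp]: "mconst c \<in> polys_in n"
  unfolding mconst_def by (rule polys_in_single) simp
lemma polys_in_mvar: "i < n \<Longrightarrow> mvar i \<in> polys_in n"
  unfolding mvar_def by (rule polys_in_single) simp
lemma polys_in_sum: "(\<And>i. i \<in> S \<Longrightarrow> f i \<in> polys_in n) \<Longrightarrow> sum f S \<in> polys_in n"
  by (induction S rule: infinite_finite_induct) (auto intro: polys_in_add)
lemma polys_in_one[simp]: "(1::'a::comm_semiring_1 mpoly) \<in> polys_in n"
  unfolding polys_in_def by simp
lemma polys_in_prod: "(\<And>i. i \<in> S \<Longrightarrow> f i \<in> polys_in n) \<Longrightarrow> (prod f S :: 'a::comm_semiring_1 mpoly) \<in> polys_in n"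
  by (induction S rule: infinite_finite_induct) (auto intro: polys_in_mult)
lemma polys_in_power: "p \<in> polys_in n \<Longrightarrow> (p :: 'a::comm_semiring_1 mpoly) ^ k \<in> polys_in n"
  by (induction k) (auto intro: polys_in_mult)

lemma mconst_add: "mconst (a + b) = mconst a + mconst b"
  by (simp add: mconst_def single_add)
lemma mconst_mult: "mconst (a * b) = mconst a * (mconst b :: 'a::comm_semiring_1 mpoly)"
  by (simp add: mconst_def mult_single)
lemma mconst_zero[simp]: "mconst 0 = 0" by (simp add: mconst_def)
lemma mconst_one[simp]: "mconst 1 = (1 :: 'a::comm_semiring_1 mpoly)" by (simp add: mconst_def)

lemma single_pow: "Poly_Mapping.single (Poly_Mapping.single i (1::nat)) (1::'a::comm_semiring_1) ^ e
     = Poly_Mapping.single (Poly_Mapping.single i e) 1"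
proof (induction e)
  case (Suc e)
  have "Poly_Mapping.single (Poly_Mapping.single i (1::nat)) (1::'a) ^ Suc e
     = Poly_Mapping.single (Poly_Mapping.single i 1) 1 * Poly_Mapping.single (Poly_Mapping.single i e) 1"
    using Suc by simp
  also have "\<dots> = Poly_Mapping.single (Poly_Mapping.single i 1 + Poly_Mapping.single i e) 1"
    by (simp only: mult_single mult_1)
  also have "Poly_Mapping.single i 1 + Poly_Mapping.single i e = Poly_Mapping.single i (Suc e)"
    by (simp only: single_add[symmetric] plus_1_eq_Suc)
  finally show ?case .
qed simp

lemma single_prod: "finite S \<Longrightarrow> (\<Prod>i\<in>S. Poly_Mapping.single (Poly_Mapping.single i (1::nat)) (1::'a::comm_semiring_1) ^ e i)
     = Poly_Mapping.single (\<Sum>i\<in>S. Poly_Mapping.single i (e i)) 1"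
proof (induction S rule: finite_induct)
  case (insert x F)
  thus ?case by (simp only: prod.insert[OF insert(1,2)] sum.insert[OF insert(1,2)] insert.IH single_pow mult_single mult_1)
qed simp

lemma single_as_prod: "Poly_Mapping.single mo c =
   mconst c * (\<Prod>i\<in>Poly_Mapping.keys mo. mvar i ^ Poly_Mapping.lookup mo i :: 'a::comm_semiring_1 mpoly)"
proof -
  have "(\<Prod>i\<in>Poly_Mapping.keys mo. mvar i ^ Poly_Mapping.lookup mo i :: 'a mpoly)
      = Poly_Mapping.single mo 1"
    unfolding mvar_def by (simp only: single_prod[OF finite_keys] pm_decomp[of mo, symmetric])
  thus ?thesis by (simp add: mconst_def mult_single)
qed

lemma mpderiv_mvar: "mpderiv a (mvar i :: 'a::comm_ring_1 mpoly) = (if a = i then 1 else 0)"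
  unfolding mpderiv_def mvar_def by (auto simp: lookup_single when_def)

lemma mpderiv_mconst: "mpderiv a (mconst c :: 'a::comm_ring_1 mpoly) = 0"
  unfolding mpderiv_def mconst_def by (auto simp: lookup_single when_def)

lemma qbracket_mconst: "qbracket n lam (mconst c) g = 0"
  unfolding qbracket_def by (simp add: mpderiv_mconst)

lemma qbracket_mvar: "i < n \<Longrightarrow> j < n \<Longrightarrow>
   qbracket n lam (mvar i) (mvar j) = mconst (lam i j) * mvar i * mvar j"
proof -
  have e: "\<And>a b. mconst (lam a b) * mvar a * mvar b * (if a = i then 1 else 0) * (if b = j then 1 else 0)
     = (if b = j then (if a = i then mconst (lam a b) * mvar a * mvar b else 0) else (0 :: 'a mpoly))"
    by simp
  assume "i < n" "j < n"
  thus ?thesis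
    unfolding qbracket_def mpderiv_mvar e by (simp add: sum.delta)
qed




definition mon :: "(nat \<Rightarrow> 'a::comm_ring_1) \<Rightarrow> (nat \<Rightarrow>\<^sub>0 nat) \<Rightarrow> 'a" where
  "mon y mo = (\<Prod>i\<in>Poly_Mapping.keys mo. y i ^ Poly_Mapping.lookup mo i)"

lemma meval_mon: "meval y p = (\<Sum>mo\<in>Poly_Mapping.keys p. Poly_Mapping.lookup p mo * mon y mo)"
  unfolding meval_def mon_def ..

lemma mon_super: "finite S \<Longrightarrow> Poly_Mapping.keys mo \<subseteq> S \<Longrightarrow> mon y mo = (\<Prod>i\<in>S. y i ^ Poly_Mapping.lookup mo i)"
  unfolding mon_def by (rule prod.mono_neutral_left) (auto simp: in_keys_iff)

lemma mon_zero[simp]: "mon y 0 = 1" by (simp add: mon_def)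

lemma mon_add: "mon y (a + b) = mon y a * mon y b"
proof -
  let ?S = "Poly_Mapping.keys a \<union> Poly_Mapping.keys b"
  have "mon y (a + b) = (\<Prod>i\<in>?S. y i ^ Poly_Mapping.lookup (a + b) i)"
    by (rule mon_super) (auto dest: keys_add[THEN subsetD])
  also have "\<dots> = (\<Prod>i\<in>?S. y i ^ Poly_Mapping.lookup a i) * (\<Prod>i\<in>?S. y i ^ Poly_Mapping.lookup b i)"
    by (simp add: lookup_add power_add prod.distrib)
  also have "\<dots> = mon y a * mon y b"
    by (simp add: mon_super[symmetric])
  finally show ?thesis .
qed

lemma mon_single: "mon y (Poly_Mapping.single i k) = y i ^ k"
  by (simp add: mon_def)

lemma meval_super: "finite S \<Longrightarrow> Poly_Mapping.keys p \<subseteq> S \<Longrightarrow> meval y p = (\<Sum>mo\<in>S. Poly_Mapping.lookup p mo * mon y mo)"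
  unfolding meval_mon by (rule sum.mono_neutral_left) (auto simp: in_keys_iff)

lemma meval_zero[simp]: "meval y 0 = 0" by (simp add: meval_def)

lemma meval_add: "meval y (p + q) = meval y p + meval y q"
proof -
  let ?S = "Poly_Mapping.keys p \<union> Poly_Mapping.keys q"
  have "meval y (p + q) = (\<Sum>mo\<in>?S. Poly_Mapping.lookup (p + q) mo * mon y mo)"
    by (rule meval_super) (auto dest: keys_add[THEN subsetD])
  also have "\<dots> = (\<Sum>mo\<in>?S. Poly_Mapping.lookup p mo * mon y mo) + (\<Sum>mo\<in>?S. Poly_Mapping.lookup q mo * mon y mo)"
    by (simp add: lookup_add distrib_right sum.distrib)
  also have "\<dots> = meval y p + meval y q"
    by (simp add: meval_super[symmetric])
  finally show ?thesis .
qed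

lemma meval_sum: "meval y (sum f S) = (\<Sum>i\<in>S. meval y (f i))"
  by (induction S rule: infinite_finite_induct) (auto simp: meval_add)

lemma meval_single: "meval y (Poly_Mapping.single mo c) = c * mon y mo"
  by (cases "c = 0") (simp_all add: meval_mon)

lemma meval_mult: "meval y (p * q) = meval y p * meval y q"
proof -
  have "p * q = (\<Sum>a\<in>Poly_Mapping.keys p. \<Sum>b\<in>Poly_Mapping.keys q.
      Poly_Mapping.single a (Poly_Mapping.lookup p a) * Poly_Mapping.single b (Poly_Mapping.lookup q b))"
    by (subst pm_decomp[of p], subst pm_decomp[of q]) (simp add: sum_distrib_left sum_distrib_right, rule sum.swap)
  hence "meval y (p * q) = (\<Sum>a\<in>Poly_Mapping.keys p. \<Sum>b\<in>Poly_Mapping.keys q.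
      (Poly_Mapping.lookup p a * mon y a) * (Poly_Mapping.lookup q b * mon y b))"
    by (simp add: meval_sum mult_single meval_single mon_add algebra_simps)
  also have "\<dots> = meval y p * meval y q"
    by (simp add: meval_mon sum_distrib_left sum_distrib_right, rule sum.swap)
  finally show ?thesis .
qed

lemma meval_mconst[simp]: "meval y (mconst c) = c"
  by (simp add: mconst_def meval_single)

lemma meval_mvar[simp]: "meval y (mvar i) = y i"
  by (simp add: mvar_def meval_single mon_single)

lemma subfield_sum: "subfield K \<Longrightarrow> (\<And>i. i \<in> S \<Longrightarrow> f i \<in> K) \<Longrightarrow> sum f S \<in> K"
  by (induction S rule: infinite_finite_induct) (auto simp: subfield_def)

lemma polys_over_add: "subfield K \<Longrightarrow> p \<in> polys_over K m \<Longrightarrow> q \<in> polys_over K m \<Longrightarrow> p + q \<in> polys_over K m"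
  unfolding polys_over_def by (auto intro: polys_in_add simp: lookup_add subfield_def)

lemma polys_over_mult:
  assumes K: "subfield K" and p: "p \<in> polys_over K m" and q: "q \<in> polys_over K m"
  shows "p * q \<in> polys_over K m"
proof -
  have "p * q = (\<Sum>a\<in>Poly_Mapping.keys p. \<Sum>b\<in>Poly_Mapping.keys q.
      Poly_Mapping.single (a + b) (Poly_Mapping.lookup p a * Poly_Mapping.lookup q b))"
    by (subst pm_decomp[of p], subst pm_decomp[of q]) (simp add: sum_distrib_left sum_distrib_right mult_single, rule sum.swap)
  hence "Poly_Mapping.lookup (p * q) mo = (\<Sum>a\<in>Poly_Mapping.keys p. \<Sum>b\<in>Poly_Mapping.keys q.
      (Poly_Mapping.lookup p a * Poly_Mapping.lookup q b when a + b = mo))" for mo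
    by (simp add: lookup_sum lookup_single)
  moreover have "(\<Sum>a\<in>Poly_Mapping.keys p. \<Sum>b\<in>Poly_Mapping.keys q.
      (Poly_Mapping.lookup p a * Poly_Mapping.lookup q b when a + b = mo)) \<in> K" for mo
    using p q K by (intro subfield_sum) (auto simp: when_def polys_over_def subfield_def)
  ultimately show ?thesis using p q polys_in_mult unfolding polys_over_def by auto
qed

lemma polys_over_single: "Poly_Mapping.keys mo \<subseteq> {..<m} \<Longrightarrow> subfield K \<Longrightarrow> c \<in> K \<Longrightarrow> Poly_Mapping.single mo c \<in> polys_over K m"
  unfolding polys_over_def by (auto intro: polys_in_single simp: lookup_single when_def subfield_def)

lemma polys_over_mconst: "subfield K \<Longrightarrow> c \<in> K \<Longrightarrow> mconst c \<in> polys_over K m"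
  unfolding mconst_def by (rule polys_over_single) auto

lemma polys_over_mvar: "i < m \<Longrightarrow> subfield K \<Longrightarrow> mvar i \<in> polys_over K m"
  unfolding mvar_def by (rule polys_over_single) (auto simp: subfield_def)




locale setting =
  fixes n :: nat and lam :: "nat \<Rightarrow> nat \<Rightarrow> 'k::field_char_0" and P :: "'k mpoly set"
    and phi :: "'k mpoly \<Rightarrow> 'f::field" and br :: "'f \<Rightarrow> 'f \<Rightarrow> 'f"
  assumes asym: "antisym_mat n lam"
    and fq: "is_poisson_fract_quot n lam P phi br"
begin

lemma pb: "poisson_bracket br" using fq unfolding is_poisson_fract_quot_def by blast

sublocale pfield br by unfold_locales (rule pb)

lemma phi_add: "a \<in> polys_in n \<Longrightarrow> b \<in> polys_in n \<Longrightarrow> phi (a + b) = phi a + phi b"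
  using fq unfolding is_poisson_fract_quot_def by blast
lemma phi_mult: "a \<in> polys_in n \<Longrightarrow> b \<in> polys_in n \<Longrightarrow> phi (a * b) = phi a * phi b"
  using fq unfolding is_poisson_fract_quot_def by blast
lemma phi_one[simp]: "phi 1 = 1"
  using fq unfolding is_poisson_fract_quot_def by blast
lemma phi_frac: "\<exists>a\<in>polys_in n. \<exists>b\<in>polys_in n. z = phi a / phi b"
  using fq unfolding is_poisson_fract_quot_def by blast
lemma phi_br: "a \<in> polys_in n \<Longrightarrow> b \<in> polys_in n \<Longrightarrow> br (phi a) (phi b) = phi (qbracket n lam a b)"
  using fq unfolding is_poisson_fract_quot_def by blast
lemma phi_ker: "a \<in> polys_in n \<Longrightarrow> phi a = 0 \<longleftrightarrow> a \<in> P"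
  using fq unfolding is_poisson_fract_quot_def by blast

lemma phi_zero[simp]: "phi 0 = 0"
  using phi_add[of 0 0] by (metis add.right_neutral add_left_cancel polys_in_zero)

lemma phi_sum: "(\<And>i. i \<in> S \<Longrightarrow> f i \<in> polys_in n) \<Longrightarrow> phi (sum f S) = (\<Sum>i\<in>S. phi (f i))"
proof (induction S rule: infinite_finite_induct)
  case (insert x F)
  thus ?case by (simp add: phi_add polys_in_sum)
qed auto

lemma phi_prod: "(\<And>i. i \<in> S \<Longrightarrow> f i \<in> polys_in n) \<Longrightarrow> phi (prod f S) = (\<Prod>i\<in>S. phi (f i))"
proof (induction S rule: infinite_finite_induct)
  case (insert x F)
  thus ?case by (simp add: phi_mult polys_in_prod)
qed auto

lemma phi_power: "a \<in> polys_in n \<Longrightarrow> phi (a ^ k) = phi a ^ k"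
  by (induction k) (auto simp: phi_mult polys_in_power)

definition emb where "emb c = phi (mconst c)"
definition u where "u i = phi (mvar i)"

lemma emb_add: "emb (a + b) = emb a + emb b"
  unfolding emb_def mconst_add by (simp add: phi_add)
lemma emb_mult: "emb (a * b) = emb a * emb b"
  unfolding emb_def mconst_mult by (simp add: phi_mult)
lemma emb_zero[simp]: "emb 0 = 0" by (simp add: emb_def)
lemma emb_one[simp]: "emb 1 = 1" by (simp add: emb_def)
lemma emb_neg: "emb (- a) = - emb a"
  using emb_add[of a "-a"] by (simp add: eq_neg_iff_add_eq_0 add.commute)
lemma emb_diff: "emb (a - b) = emb a - emb b"
  using emb_add[of a "-b"] emb_neg[of b] by simp
lemma emb_sum: "emb (sum f S) = (\<Sum>i\<in>S. emb (f i))"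
  by (induction S rule: infinite_finite_induct) (auto simp: emb_add)
lemma emb_of_nat[simp]: "emb (of_nat k) = of_nat k"
  by (induction k) (auto simp: emb_add)
lemma emb_of_int[simp]: "emb (of_int k) = of_int k"
  by (cases k rule: int_cases) (auto simp: emb_neg simp del: of_nat_Suc)
lemma emb_inj: "emb c = 0 \<Longrightarrow> c = 0"
proof (rule ccontr)
  assume "emb c = 0" "c \<noteq> 0"
  hence "emb (c * inverse c) = 0" by (simp only: emb_mult mult_zero_left)
  moreover have "c * inverse c = 1" using \<open>c \<noteq> 0\<close> by simp
  ultimately show False by simp
qed

lemma phi_expand: "a \<in> polys_in n \<Longrightarrow>
  phi a = (\<Sum>mo\<in>Poly_Mapping.keys a. emb (Poly_Mapping.lookup a mo) * (\<Prod>i\<in>Poly_Mapping.keys mo. u i ^ Poly_Mapping.lookup mo i))"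
proof -
  assume a: "a \<in> polys_in n"
  have ks: "\<And>mo i. mo \<in> Poly_Mapping.keys a \<Longrightarrow> i \<in> Poly_Mapping.keys mo \<Longrightarrow> i < n"
    using a unfolding polys_in_def by blast
  have "phi a = phi (\<Sum>mo\<in>Poly_Mapping.keys a. Poly_Mapping.single mo (Poly_Mapping.lookup a mo))"
    by (subst pm_decomp[of a]) (rule refl)
  also have "\<dots> = (\<Sum>mo\<in>Poly_Mapping.keys a. phi (Poly_Mapping.single mo (Poly_Mapping.lookup a mo)))"
    using ks by (intro phi_sum polys_in_single) auto
  also have "\<dots> = (\<Sum>mo\<in>Poly_Mapping.keys a. emb (Poly_Mapping.lookup a mo) * (\<Prod>i\<in>Poly_Mapping.keys mo. u i ^ Poly_Mapping.lookup mo i))"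
  proof (rule sum.cong[OF refl])
    fix mo assume mo: "mo \<in> Poly_Mapping.keys a"
    have "phi (Poly_Mapping.single mo (Poly_Mapping.lookup a mo))
       = phi (mconst (Poly_Mapping.lookup a mo) * (\<Prod>i\<in>Poly_Mapping.keys mo. mvar i ^ Poly_Mapping.lookup mo i))"
      by (simp only: single_as_prod)
    also have "\<dots> = emb (Poly_Mapping.lookup a mo) * (\<Prod>i\<in>Poly_Mapping.keys mo. u i ^ Poly_Mapping.lookup mo i)"
      using ks[OF mo] unfolding emb_def u_def
      by (simp add: phi_mult phi_prod phi_power polys_in_prod polys_in_power polys_in_mvar)
    finally show "phi (Poly_Mapping.single mo (Poly_Mapping.lookup a mo)) = emb (Poly_Mapping.lookup a mo) * (\<Prod>i\<in>Poly_Mapping.keys mo. u i ^ Poly_Mapping.lookup mo i)" .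
  qed
  finally show ?thesis .
qed

lemma csub_sum: "csub S \<Longrightarrow> (\<And>i. i \<in> A \<Longrightarrow> f i \<in> S) \<Longrightarrow> sum f A \<in> S"
  by (induction A rule: infinite_finite_induct) (auto simp: csub_def)
lemma csub_prod: "csub S \<Longrightarrow> (\<And>i. i \<in> A \<Longrightarrow> f i \<in> S) \<Longrightarrow> prod f A \<in> S"
  by (induction A rule: infinite_finite_induct) (auto simp: csub_def)
lemma csub_power: "csub S \<Longrightarrow> a \<in> S \<Longrightarrow> a ^ k \<in> S"
  by (induction k) (auto simp: csub_def)
lemma csub_powi: "csub S \<Longrightarrow> a \<in> S \<Longrightarrow> a powi k \<in> S"
  unfolding power_int_def by (auto intro!: csub_power simp: csub_def)

lemma EV:
  assumes S: "csub S" and e: "\<And>c. emb c \<in> S" and us: "\<And>i. i < n \<Longrightarrow> u i \<in> S"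
  shows "z \<in> S"
proof -
  have g: "phi a \<in> S" if a: "a \<in> polys_in n" for a
  proof -
    have ks: "\<And>mo i. mo \<in> Poly_Mapping.keys a \<Longrightarrow> i \<in> Poly_Mapping.keys mo \<Longrightarrow> i < n"
      using a unfolding polys_in_def by blast
    have "emb (Poly_Mapping.lookup a mo) * (\<Prod>i\<in>Poly_Mapping.keys mo. u i ^ Poly_Mapping.lookup mo i) \<in> S"
      if mo: "mo \<in> Poly_Mapping.keys a" for mo
    proof -
      have "(\<Prod>i\<in>Poly_Mapping.keys mo. u i ^ Poly_Mapping.lookup mo i) \<in> S"
        using S us ks[OF mo] by (intro csub_prod csub_power) auto
      thus ?thesis using e S unfolding csub_def by blast
    qed
    thus ?thesis unfolding phi_expand[OF a] using S by (intro csub_sum) auto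
  qed
  obtain a b where "a \<in> polys_in n" "b \<in> polys_in n" "z = phi a / phi b" using phi_frac by blast
  thus ?thesis using g S unfolding csub_def by (simp add: divide_inverse)
qed

lemma emb_central: "br (emb c) z = 0"
proof -
  have "z \<in> {z. br (emb c) z = 0}"
  proof (rule EV[OF csub_comm])
    fix c' show "emb c' \<in> {z. br (emb c) z = 0}"
      unfolding emb_def by (simp add: phi_br qbracket_mconst)
  next
    fix i assume "i < n" thus "u i \<in> {z. br (emb c) z = 0}"
      unfolding emb_def u_def by (simp add: phi_br qbracket_mconst polys_in_mvar)
  qed
  thus ?thesis by simp
qed

lemma emb_cen: "emb c \<in> cen" using emb_central unfolding cen_def by blast

lemma br_u: "i < n \<Longrightarrow> j < n \<Longrightarrow> br (u i) (u j) = emb (lam i j) * u i * u j"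
  unfolding u_def emb_def
  by (simp add: phi_br qbracket_mvar polys_in_mvar phi_mult polys_in_mult)

end



lemma sum_if1: "i < (n::nat) \<Longrightarrow> (\<Sum>l<n. if l = i then g l else 0) = (g i::'a::comm_ring_1)"
  by (simp add: sum.delta)
lemma sum_delta_r: "i < (n::nat) \<Longrightarrow> (\<Sum>l<n. f l * (if l = i then c else 0)) = f i * (c::'a::comm_ring_1)"
proof -
  assume "i < n"
  have "(\<Sum>l<n. f l * (if l = i then c else 0)) = (\<Sum>l<n. if l = i then f l * c else 0)"
    by (rule sum.cong) auto
  thus ?thesis using \<open>i < n\<close> by (simp add: sum.delta)
qed
lemma sum_delta_l: "i < (n::nat) \<Longrightarrow> (\<Sum>l<n. (if l = i then c else 0) * f l) = c * (f i::'a::comm_ring_1)"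
  using sum_delta_r[of i n f c] by (simp add: mult.commute)

lemma GL_id: "GL_int n (\<lambda>i j. if i = j then 1 else 0)"
  unfolding GL_int_def
proof (rule exI[of _ "\<lambda>i j. if i = j then 1 else 0"], intro allI impI conjI)
  fix i j :: nat assume "i < n" "j < n"
  have "(\<Sum>l<n. (if i = l then 1 else 0) * (if l = j then 1 else 0)) = (\<Sum>l<n. if l = i then (if l = j then 1 else 0) else (0::int))"
    by (rule sum.cong) auto
  also have "\<dots> = (if i = j then 1 else 0)" using \<open>i < n\<close> by (simp add: sum_if1)
  finally show "(\<Sum>l<n. (if i = l then 1 else 0) * (if l = j then 1 else 0)) = (if i = j then 1 else (0::int))" .
  thus "(\<Sum>l<n. (if i = l then 1 else 0) * (if l = j then 1 else 0)) = (if i = j then 1 else (0::int))" .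
qed

lemma GL_elem:
  assumes G: "GL_int n s" and r: "r1 < n" "r2 < n" "r1 \<noteq> r2"
  shows "GL_int n (\<lambda>i l. s i l + (if i = r2 then q else 0) * s r1 l)"
proof -
  obtain t where t: "\<And>i j. i < n \<Longrightarrow> j < n \<Longrightarrow> (\<Sum>l<n. s i l * t l j) = (if i = j then 1 else 0)"
     "\<And>i j. i < n \<Longrightarrow> j < n \<Longrightarrow> (\<Sum>l<n. t i l * s l j) = (if i = j then 1 else 0)"
    using G unfolding GL_int_def by blast
  define e where "e i = (if i = r2 then q else 0)" for i
  define f where "f j = (if j = r1 then q else 0)" for j
  show ?thesis unfolding GL_int_def e_def[symmetric]
  proof (rule exI[of _ "\<lambda>l j. t l j - t l r2 * f j"], intro allI impI conjI)
    fix i j assume ij: "i < n" "j < n"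
    have "(\<Sum>l<n. (s i l + e i * s r1 l) * (t l j - t l r2 * f j))
        = (\<Sum>l<n. s i l * t l j) - f j * (\<Sum>l<n. s i l * t l r2) + e i * (\<Sum>l<n. s r1 l * t l j)
          - e i * f j * (\<Sum>l<n. s r1 l * t l r2)"
      by (simp add: algebra_simps sum.distrib sum_subtractf sum_distrib_left)
    also have "\<dots> = (if i = j then 1 else 0)"
      using ij r by (simp add: t e_def f_def)
    finally show "(\<Sum>l<n. (s i l + e i * s r1 l) * (t l j - t l r2 * f j)) = (if i = j then 1 else 0)" .
    have "(\<Sum>l<n. (t i l - t i r2 * f l) * (s l j + e l * s r1 j))
        = (\<Sum>l<n. t i l * s l j) + s r1 j * (\<Sum>l<n. t i l * e l) - t i r2 * (\<Sum>l<n. f l * s l j)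
          - t i r2 * s r1 j * (\<Sum>l<n. f l * e l)"
      by (simp add: algebra_simps sum.distrib sum_subtractf sum_distrib_left)
    also have "(\<Sum>l<n. t i l * e l) = t i r2 * q" unfolding e_def using r by (simp add: sum_delta_r)
    also have "(\<Sum>l<n. f l * s l j) = q * s r1 j" unfolding f_def using r by (simp add: sum_delta_l)
    also have "(\<Sum>l<n. f l * e l) = 0" unfolding f_def e_def using r by (simp add: sum_delta_l)
    finally show "(\<Sum>l<n. (t i l - t i r2 * f l) * (s l j + e l * s r1 j)) = (if i = j then 1 else 0)"
      using ij by (simp add: t)
  qed
qed

lemma GL_perm:
  assumes G: "GL_int n s" and p: "bij_betw p {..<n} {..<n}"
  shows "GL_int n (\<lambda>i. s (p i))"
proof -
  obtain t where t: "\<And>i j. i < n \<Longrightarrow> j < n \<Longrightarrow> (\<Sum>l<n. s i l * t l j) = (if i = j then 1 else 0)"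
     "\<And>i j. i < n \<Longrightarrow> j < n \<Longrightarrow> (\<Sum>l<n. t i l * s l j) = (if i = j then 1 else 0)"
    using G unfolding GL_int_def by blast
  have pin: "i < n \<Longrightarrow> p i < n" for i using p unfolding bij_betw_def by auto
  have inj: "i < n \<Longrightarrow> j < n \<Longrightarrow> p i = p j \<longleftrightarrow> i = j" for i j
    using p unfolding bij_betw_def inj_on_def by auto
  show ?thesis unfolding GL_int_def
  proof (rule exI[of _ "\<lambda>i j. t i (p j)"], intro allI impI conjI)
    fix i j assume ij: "i < n" "j < n"
    show "(\<Sum>l<n. s (p i) l * t l (p j)) = (if i = j then 1 else 0)"
      using ij by (simp add: t pin inj)
    have "(\<Sum>l<n. t i (p l) * s (p l) j) = (\<Sum>l<n. t i l * s l j)"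
      using sum.reindex_bij_betw[OF p, of "\<lambda>l. t i l * s l j"] by simp
    thus "(\<Sum>l<n. t i (p l) * s (p l) j) = (if i = j then 1 else 0)" using ij t by simp
  qed
qed

lemma perm_exists:
  assumes A: "A \<subseteq> {..<n}"
  shows "\<exists>p. bij_betw p {..<n} {..<n} \<and> p ` {..<card A} = A"
proof -
  have fA: "finite A" using A finite_subset by blast
  obtain f where f: "bij_betw f {0..<card A} A" using ex_bij_betw_nat_finite[OF fA] by blast
  have fB: "finite ({..<n} - A)" by simp
  obtain g where g: "bij_betw g {0..<card ({..<n} - A)} ({..<n} - A)" using ex_bij_betw_nat_finite[OF fB] by blast
  have cB: "card ({..<n} - A) = n - card A" using A fA by (simp add: card_Diff_subset)
  have cA: "card A \<le> n" using A card_mono[of "{..<n}" A] by simp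
  define p where "p x = (if x < card A then f x else g (x - card A))" for x
  have b1: "bij_betw p {..<card A} A"
    using f by (subst bij_betw_cong[of _ p f]) (auto simp: p_def atLeast0LessThan)
  have b2': "bij_betw (\<lambda>x. x - card A) {card A..<n} {0..<n - card A}"
    unfolding bij_betw_def
  proof
    show "inj_on (\<lambda>x. x - card A) {card A..<n}" by (auto simp: inj_on_def)
    show "(\<lambda>x. x - card A) ` {card A..<n} = {0..<n - card A}"
    proof (rule set_eqI, rule iffI)
      fix x assume "x \<in> {0..<n - card A}"
      hence "x + card A \<in> {card A..<n}" "x = (x + card A) - card A" by auto
      thus "x \<in> (\<lambda>x. x - card A) ` {card A..<n}" by blast
    qed auto
  qed
  have b2: "bij_betw p {card A..<n} ({..<n} - A)"
  proof -
    have "bij_betw (g \<circ> (\<lambda>x. x - card A)) {card A..<n} ({..<n} - A)"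
      using bij_betw_trans[OF b2'] g cB by simp
    thus ?thesis by (subst bij_betw_cong[of _ p "g \<circ> (\<lambda>x. x - card A)"]) (auto simp: p_def)
  qed
  have "bij_betw p ({..<card A} \<union> {card A..<n}) (A \<union> ({..<n} - A))"
    by (rule bij_betw_combine[OF b1 b2]) auto
  moreover have "{..<card A} \<union> {card A..<n} = {..<n}" using cA by auto
  moreover have "A \<union> ({..<n} - A) = {..<n}" using A by auto
  ultimately show ?thesis using b1 unfolding bij_betw_def by auto
qed




definition ell :: "nat set \<Rightarrow> (nat \<Rightarrow> nat \<Rightarrow> 'k::field_char_0) \<Rightarrow> (nat \<Rightarrow> int) \<Rightarrow> nat \<Rightarrow> 'k" where
  "ell T lam v j = (\<Sum>i\<in>T. of_int (v i) * lam i j)"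

definition linv :: "nat \<Rightarrow> nat set \<Rightarrow> (nat \<Rightarrow> nat \<Rightarrow> 'k::field_char_0) \<Rightarrow> (nat \<Rightarrow> nat \<Rightarrow> int) \<Rightarrow> nat set \<Rightarrow> bool" where
  "linv n T lam s A \<longleftrightarrow> GL_int n s \<and> A \<subseteq> {..<n} \<and> (\<forall>r\<in>A. \<forall>i<n. s r i \<noteq> 0 \<longrightarrow> i \<in> T)
     \<and> (\<forall>r<n. r \<notin> A \<longrightarrow> (\<forall>j\<in>T. ell T lam (s r) j = 0))"

definition lindep :: "nat set \<Rightarrow> (nat \<Rightarrow> nat \<Rightarrow> 'k::field_char_0) \<Rightarrow> (nat \<Rightarrow> nat \<Rightarrow> int) \<Rightarrow> nat set \<Rightarrow> bool" where
  "lindep T lam s A \<longleftrightarrow> (\<forall>c. (\<forall>j\<in>T. (\<Sum>r\<in>A. of_int (c r) * ell T lam (s r) j) = 0) \<longrightarrow> (\<forall>r\<in>A. c r = 0))"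

lemma ell_lin: "ell T lam (\<lambda>l. v l + e * w l) j = ell T lam v j + of_int e * ell T lam w j"
  unfolding ell_def by (simp add: algebra_simps sum.distrib sum_distrib_left)

lemma step:
  fixes lam :: "nat \<Rightarrow> nat \<Rightarrow> 'k::field_char_0"
  assumes "linv n T lam s A" "\<forall>j\<in>T. (\<Sum>r\<in>A. of_int (c r) * ell T lam (s r) j) = (0::'k)" "r0 \<in> A" "c r0 \<noteq> 0"
  shows "\<exists>s' A'. linv n T lam s' A' \<and> card A' < card A"
  using assms
proof (induction "\<Sum>r\<in>A. nat \<bar>c r\<bar>" arbitrary: s c r0 rule: less_induct)
  case less
  have fA: "finite A" using less.prems(1) unfolding linv_def using finite_subset by blast
  show ?case
  proof (cases "\<forall>r\<in>A. r \<noteq> r0 \<longrightarrow> c r = 0")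
    case True
    have z: "ell T lam (s r0) j = 0" if j: "j \<in> T" for j
    proof -
      have "(\<Sum>r\<in>A. of_int (c r) * ell T lam (s r) j) = of_int (c r0) * ell T lam (s r0) j"
        using True fA less.prems(3) by (subst sum.remove[of _ r0]) auto
      hence "of_int (c r0) * ell T lam (s r0) j = 0" using less.prems(2) j by simp
      thus ?thesis using less.prems(4) by simp
    qed
    have L: "linv n T lam s A" by (rule less.prems(1))
    have "linv n T lam s (A - {r0})"
      unfolding linv_def
    proof (intro conjI)
      show "GL_int n s" using L unfolding linv_def by blast
      show "A - {r0} \<subseteq> {..<n}" using L unfolding linv_def by blast
      show "\<forall>r\<in>A - {r0}. \<forall>i<n. s r i \<noteq> 0 \<longrightarrow> i \<in> T" using L unfolding linv_def by blast
      show "\<forall>r<n. r \<notin> A - {r0} \<longrightarrow> (\<forall>j\<in>T. ell T lam (s r) j = 0)"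
      proof (intro allI impI ballI)
        fix r j assume "r < n" "r \<notin> A - {r0}" "j \<in> T"
        thus "ell T lam (s r) j = 0"
        proof (cases "r = r0")
          case True thus ?thesis using z \<open>j \<in> T\<close> by simp
        next
          case False thus ?thesis using L \<open>r < n\<close> \<open>r \<notin> A - {r0}\<close> \<open>j \<in> T\<close> unfolding linv_def by blast
        qed
      qed
    qed
    moreover have "card (A - {r0}) < card A" using fA less.prems(3) by (rule card_Diff1_less)
    ultimately show ?thesis by blast
  next
    case False
    then obtain r1 where r1: "r1 \<in> A" "r1 \<noteq> r0" "c r1 \<noteq> 0" by blast
    obtain a b where ab: "a \<in> A" "b \<in> A" "a \<noteq> b" "c a \<noteq> 0" "c b \<noteq> 0" "\<bar>c b\<bar> \<le> \<bar>c a\<bar>"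
    proof (cases "\<bar>c r1\<bar> \<le> \<bar>c r0\<bar>")
      case True thus ?thesis using that[of r0 r1] r1 less.prems by auto
    next
      case False thus ?thesis using that[of r1 r0] r1 less.prems by auto
    qed
    define q :: int where "q = (if (0 < c a) = (0 < c b) then 1 else -1)"
    define s' where "s' = (\<lambda>i l. s i l + (if i = b then q else 0) * s a l)"
    define c' where "c' = c(a := c a - q * c b)"
    have An: "A \<subseteq> {..<n}" using less.prems(1) unfolding linv_def by blast
    have s'_eq: "r \<noteq> b \<Longrightarrow> s' r = s r" for r by (simp add: s'_def fun_eq_iff)
    have s'_b: "s' b = (\<lambda>l. s b l + q * s a l)" by (simp add: s'_def fun_eq_iff)
    have inv': "linv n T lam s' A"
      unfolding linv_def
    proof (intro conjI)
      show "GL_int n s'" unfolding s'_def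
        using less.prems(1) ab An unfolding linv_def by (intro GL_elem) auto
      show "A \<subseteq> {..<n}" by (rule An)
      show "\<forall>r\<in>A. \<forall>i<n. s' r i \<noteq> 0 \<longrightarrow> i \<in> T"
      proof (intro ballI allI impI)
        fix r i assume r: "r \<in> A" and i: "i < n" and nz: "s' r i \<noteq> 0"
        have sup: "\<forall>r\<in>A. \<forall>i<n. s r i \<noteq> 0 \<longrightarrow> i \<in> T" using less.prems(1) unfolding linv_def by blast
        show "i \<in> T"
        proof (cases "r = b")
          case True
          hence "s b i \<noteq> 0 \<or> s a i \<noteq> 0" using nz s'_b by auto
          thus ?thesis using sup ab i by blast
        next
          case False thus ?thesis using nz s'_eq sup r i by metis
        qed
      qed
      show "\<forall>r<n. r \<notin> A \<longrightarrow> (\<forall>j\<in>T. ell T lam (s' r) j = 0)"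
      proof (intro allI impI ballI)
        fix r j assume "r < n" "r \<notin> A" "j \<in> T"
        moreover have "r \<noteq> b" using ab \<open>r \<notin> A\<close> by blast
        ultimately show "ell T lam (s' r) j = 0" using less.prems(1) s'_eq unfolding linv_def by metis
      qed
    qed
    have rel': "\<forall>j\<in>T. (\<Sum>r\<in>A. of_int (c' r) * ell T lam (s' r) j) = (0::'k)"
    proof
      fix j assume j: "j \<in> T"
      define E where "E r = ell T lam (s r) j" for r
      have "(\<Sum>r\<in>A. of_int (c' r) * ell T lam (s' r) j)
         = (\<Sum>r\<in>A. of_int (c r) * E r + (if r = a then - (of_int q * of_int (c b) * E a) else 0)
              + (if r = b then of_int (c b) * of_int q * E a else 0))"
      proof (rule sum.cong[OF refl])
        fix r assume "r \<in> A"
        have ell_eq: "ell T lam (s' r) j = E r + of_int (if r = b then q else 0) * E a"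
          unfolding s'_def E_def by (rule ell_lin)
        show "of_int (c' r) * ell T lam (s' r) j = of_int (c r) * E r + (if r = a then - (of_int q * of_int (c b) * E a) else 0)
              + (if r = b then of_int (c b) * of_int q * E a else 0)"
        proof (cases "r = a")
          case True thus ?thesis using ab(3) ell_eq by (simp add: c'_def algebra_simps)
        next
          case False
          show ?thesis
          proof (cases "r = b")
            case True thus ?thesis using ab(3) ell_eq by (simp add: c'_def algebra_simps)
          next
            case False thus ?thesis using \<open>r \<noteq> a\<close> ell_eq by (simp add: c'_def)
          qed
        qed
      qed
      also have "\<dots> = (\<Sum>r\<in>A. of_int (c r) * E r) + (\<Sum>r\<in>A. (if r = a then - (of_int q * of_int (c b) * E a) else 0))
              + (\<Sum>r\<in>A. (if r = b then of_int (c b) * of_int q * E a else 0))"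
        by (simp only: sum.distrib)
      also have "\<dots> = (\<Sum>r\<in>A. of_int (c r) * E r)"
        using fA ab(1,2) by (simp only: sum.delta if_True) simp
      also have "\<dots> = 0" using less.prems(2) j unfolding E_def by simp
      finally show "(\<Sum>r\<in>A. of_int (c' r) * ell T lam (s' r) j) = 0" .
    qed
    have lt: "nat \<bar>c' a\<bar> < nat \<bar>c a\<bar>"
    proof -
      have "c' a = c a - q * c b" by (simp add: c'_def)
      moreover have "\<bar>c a - q * c b\<bar> < \<bar>c a\<bar>"
      proof (cases "0 < c a"; cases "0 < c b")
        assume "0 < c a" "0 < c b" thus ?thesis using ab unfolding q_def by simp
      next
        assume "0 < c a" "\<not> 0 < c b" thus ?thesis using ab unfolding q_def by simp
      next
        assume "\<not> 0 < c a" "0 < c b" thus ?thesis using ab unfolding q_def by simp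
      next
        assume "\<not> 0 < c a" "\<not> 0 < c b" thus ?thesis using ab unfolding q_def by simp
      qed
      ultimately show ?thesis by simp
    qed
    have e1: "(\<Sum>r\<in>A - {a}. nat \<bar>c' r\<bar>) = (\<Sum>r\<in>A - {a}. nat \<bar>c r\<bar>)"
      by (rule sum.cong) (auto simp: c'_def)
    have "(\<Sum>r\<in>A. nat \<bar>c' r\<bar>) = nat \<bar>c' a\<bar> + (\<Sum>r\<in>A - {a}. nat \<bar>c r\<bar>)"
      using fA ab e1 by (simp add: sum.remove[of _ a])
    also have "\<dots> < nat \<bar>c a\<bar> + (\<Sum>r\<in>A - {a}. nat \<bar>c r\<bar>)" using lt by simp
    also have "\<dots> = (\<Sum>r\<in>A. nat \<bar>c r\<bar>)" using fA ab by (simp add: sum.remove[of _ a])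
    finally have dec: "(\<Sum>r\<in>A. nat \<bar>c' r\<bar>) < (\<Sum>r\<in>A. nat \<bar>c r\<bar>)" .
    have "c' b \<noteq> 0" using ab unfolding c'_def by simp
    thus ?thesis using less.hyps[OF dec inv' rel' ab(2)] by blast
  qed
qed

lemma lattice_main:
  fixes lam :: "nat \<Rightarrow> nat \<Rightarrow> 'k::field_char_0"
  shows "linv n T lam s A \<Longrightarrow> \<exists>s' A'. linv n T lam s' A' \<and> lindep T lam s' A'"
proof (induction "card A" arbitrary: s A rule: less_induct)
  case less
  show ?case
  proof (cases "lindep T lam s A")
    case True thus ?thesis using less.prems by blast
  next
    case False
    then obtain c r0 where "\<forall>j\<in>T. (\<Sum>r\<in>A. of_int (c r) * ell T lam (s r) j) = (0::'k)" "r0 \<in> A" "c r0 \<noteq> 0"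
      unfolding lindep_def by blast
    then obtain s' A' where "linv n T lam s' A'" "card A' < card A" using step[OF less.prems] by blast
    thus ?thesis using less.hyps by blast
  qed
qed

lemma lattice_init:
  fixes lam :: "nat \<Rightarrow> nat \<Rightarrow> 'k::field_char_0"
  assumes "T \<subseteq> {..<n}"
  shows "linv n T lam (\<lambda>i j. if i = j then 1 else 0) T"
  unfolding linv_def
proof (intro conjI)
  show "GL_int n (\<lambda>i j. if i = j then 1 else 0)" by (rule GL_id)
  show "T \<subseteq> {..<n}" by (rule assms)
  show "\<forall>r\<in>T. \<forall>i<n. (if r = i then 1 else 0) \<noteq> (0::int) \<longrightarrow> i \<in> T" by auto
  show "\<forall>r<n. r \<notin> T \<longrightarrow> (\<forall>j\<in>T. ell T lam (\<lambda>j. if r = j then 1 else 0) j = 0)"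
  proof (intro allI impI ballI)
    fix r j assume "r < n" "r \<notin> T" "j \<in> T"
    show "ell T lam (\<lambda>j. if r = j then 1 else 0) j = 0"
      unfolding ell_def by (rule sum.neutral) (use \<open>r \<notin> T\<close> in auto)
  qed
qed

lemma lattice:
  fixes lam :: "nat \<Rightarrow> nat \<Rightarrow> 'k::field_char_0"
  assumes "T \<subseteq> {..<n}"
  shows "\<exists>s A. linv n T lam s A \<and> lindep T lam s A"
  using lattice_main[OF lattice_init[OF assms]] by blast




lemma prod_powi: "(prod f S) powi k = (\<Prod>i\<in>S. f i powi k)" for f :: "'a \<Rightarrow> 'b::field"
  by (induction S rule: infinite_finite_induct) (auto simp: power_int_mult_distrib)

lemma powi_sum: "(a::'b::field) \<noteq> 0 \<Longrightarrow> (\<Prod>r\<in>S. a powi e r) = a powi (sum e S)"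
  by (induction S rule: infinite_finite_induct) (auto simp: power_int_add)

context setting
begin

definition Tu where "Tu = {i. i < n \<and> u i \<noteq> 0}"

lemma Tu_sub: "Tu \<subseteq> {..<n}" by (auto simp: Tu_def)
lemma finite_Tu[simp]: "finite Tu" using Tu_sub finite_subset by blast

definition W where "W v = (\<Prod>i\<in>Tu. u i powi v i)"

lemma W_nz: "W v \<noteq> 0" unfolding W_def by (auto simp: Tu_def)

lemma ld_W: "ld (W v) z = (\<Sum>i\<in>Tu. of_int (v i) * ld (u i) z)"
  unfolding W_def by (subst ld_prod) (auto simp: Tu_def ld_powi)

lemma ld_u: "i \<in> Tu \<Longrightarrow> j < n \<Longrightarrow> ld (u i) (u j) = emb (lam i j) * u j"
  unfolding ld_def by (auto simp: Tu_def br_u)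

lemma emb_ell: "emb (ell Tu lam v j) = (\<Sum>i\<in>Tu. of_int (v i) * emb (lam i j))"
  unfolding ell_def by (simp add: emb_sum emb_mult)

lemma ld_W_u: "j < n \<Longrightarrow> ld (W v) (u j) = emb (ell Tu lam v j) * u j"
  unfolding ld_W emb_ell by (simp add: ld_u sum_distrib_right mult.assoc Tu_def)

lemma br_W_u: "j < n \<Longrightarrow> br (W v) (u j) = emb (ell Tu lam v j) * W v * u j"
  by (simp add: br_ld ld_W_u mult.assoc mult.left_commute)

lemma lam_anti: "a < n \<Longrightarrow> b < n \<Longrightarrow> lam a b = - lam b a"
  using asym unfolding antisym_mat_def by blast

lemma br_W_W: "br (W v) (W w) = emb (\<Sum>a\<in>Tu. \<Sum>b\<in>Tu. of_int (v a) * lam a b * of_int (w b)) * W v * W w"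
proof -
  have la: "ld (u a) (W w) = W w * emb (\<Sum>b\<in>Tu. lam a b * of_int (w b))" if a: "a \<in> Tu" for a
  proof -
    have ua: "u a \<noteq> 0" and an: "a < n" using a by (auto simp: Tu_def)
    have "ld (u a) (W w) = - br (W w) (u a) / u a" unfolding ld_def by (subst anti) simp
    also have "\<dots> = - emb (ell Tu lam w a) * W w" using ua an by (simp add: br_W_u)
    also have "ell Tu lam w a = - (\<Sum>b\<in>Tu. lam a b * of_int (w b))"
      unfolding ell_def using an Tu_sub
      by (auto simp: sum_negf[symmetric] intro!: sum.cong dest!: subsetD[OF Tu_sub] simp: lam_anti[of a])
    finally show ?thesis by (simp add: emb_neg)
  qed
  have "br (W v) (W w) = W v * (\<Sum>a\<in>Tu. of_int (v a) * ld (u a) (W w))"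
    by (simp add: br_ld ld_W)
  also have "\<dots> = W v * (\<Sum>a\<in>Tu. of_int (v a) * (W w * emb (\<Sum>b\<in>Tu. lam a b * of_int (w b))))"
    by (simp add: la)
  also have "\<dots> = emb (\<Sum>a\<in>Tu. \<Sum>b\<in>Tu. of_int (v a) * lam a b * of_int (w b)) * W v * W w"
    by (simp add: emb_sum emb_mult sum_distrib_left sum_distrib_right mult_ac)
  finally show ?thesis .
qed

lemma W_central:
  assumes z: "\<And>j. j \<in> Tu \<Longrightarrow> ell Tu lam v j = 0"
  shows "W v \<in> cen"
proof -
  have "x \<in> {x. br (W v) x = 0}" for x
  proof (rule EV[OF csub_comm])
    fix c show "emb c \<in> {x. br (W v) x = 0}" by (simp add: anti[of "W v"] emb_central)
  next
    fix i assume i: "i < n"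
    show "u i \<in> {x. br (W v) x = 0}"
    proof (cases "i \<in> Tu")
      case True thus ?thesis using i z by (simp add: br_W_u)
    next
      case False hence "u i = 0" using i by (simp add: Tu_def)
      thus ?thesis by simp
    qed
  qed
  thus ?thesis unfolding cen_def by blast
qed

end



context pfield begin
lemma suml: "br (sum f S) z = (\<Sum>i\<in>S. br (f i) z)"
  by (induction S rule: infinite_finite_induct) (auto simp: addl)
end

locale final = setting +
  fixes s :: "nat \<Rightarrow> nat \<Rightarrow> int" and A :: "nat set" and p :: "nat \<Rightarrow> nat"
  assumes li: "linv n Tu lam s A" and lde: "lindep Tu lam s A"
    and pbij: "bij_betw p {..<n} {..<n}" and pim: "p ` {..<card A} = A"
begin

definition m where "m = card A"
definition sf where "sf k = s (p k)" for k
definition y where "y k = W (sf k)" for k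

lemma A_sub: "A \<subseteq> {..<n}" using li unfolding linv_def by blast
lemma m_le: "m \<le> n" unfolding m_def using card_mono[OF _ A_sub] by simp
lemma pA: "k < m \<Longrightarrow> p k \<in> A" using pim unfolding m_def by blast
lemma y_nz: "y k \<noteq> 0" unfolding y_def by (rule W_nz)
lemma inj_p: "inj_on p {..<m}"
  using pbij m_le unfolding bij_betw_def by (auto intro: inj_on_subset)

lemma supp: "k < m \<Longrightarrow> i < n \<Longrightarrow> sf k i \<noteq> 0 \<Longrightarrow> i \<in> Tu"
  using li pA unfolding linv_def sf_def by blast

lemma lindep': "(\<forall>j\<in>Tu. (\<Sum>k<m. of_int (c k) * ell Tu lam (sf k) j) = 0) \<Longrightarrow> k < m \<Longrightarrow> c k = 0"
proof -
  assume h: "\<forall>j\<in>Tu. (\<Sum>k<m. of_int (c k) * ell Tu lam (sf k) j) = 0" and k: "k < m"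
  define c' where "c' r = c (inv_into {..<m} p r)" for r
  have cp: "k < m \<Longrightarrow> c' (p k) = c k" for k unfolding c'_def using inj_p by simp
  have "(\<Sum>r\<in>A. of_int (c' r) * ell Tu lam (s r) j) = (\<Sum>k<m. of_int (c k) * ell Tu lam (sf k) j)" for j
  proof -
    have "(\<Sum>r\<in>A. of_int (c' r) * ell Tu lam (s r) j) = (\<Sum>r\<in>p ` {..<m}. of_int (c' r) * ell Tu lam (s r) j)"
      using pim by (simp add: m_def)
    also have "\<dots> = (\<Sum>k<m. of_int (c' (p k)) * ell Tu lam (s (p k)) j)"
      by (simp add: sum.reindex[OF inj_p])
    also have "\<dots> = (\<Sum>k<m. of_int (c k) * ell Tu lam (sf k) j)"
      by (rule sum.cong) (auto simp: cp sf_def)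
    finally show ?thesis .
  qed
  hence "\<forall>r\<in>A. c' r = 0" using lde h unfolding lindep_def by simp
  thus "c k = 0" using pA[OF k] cp[OF k] by simp
qed

lemma br_y: "k < m \<Longrightarrow> k' < m \<Longrightarrow> br (y k) (y k') = emb (conj_mat n sf lam k k') * y k * y k'"
proof -
  assume k: "k < m" "k' < m"
  have eq: "(\<Sum>a\<in>Tu. \<Sum>b\<in>Tu. of_int (sf k a) * lam a b * of_int (sf k' b)) = conj_mat n sf lam k k'"
    unfolding conj_mat_def
  proof (rule sum.mono_neutral_cong_left)
    show "Tu \<subseteq> {..<n}" by (rule Tu_sub)
    show "\<forall>a\<in>{..<n} - Tu. (\<Sum>b<n. of_int (sf k a) * lam a b * of_int (sf k' b)) = 0"
    proof
      fix a assume "a \<in> {..<n} - Tu"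
      hence "sf k a = 0" using supp[OF k(1)] by blast
      thus "(\<Sum>b<n. of_int (sf k a) * lam a b * of_int (sf k' b)) = 0" by simp
    qed
    fix a assume "a \<in> Tu"
    show "(\<Sum>b\<in>Tu. of_int (sf k a) * lam a b * of_int (sf k' b)) = (\<Sum>b<n. of_int (sf k a) * lam a b * of_int (sf k' b))"
    proof (rule sum.mono_neutral_left)
      show "\<forall>b\<in>{..<n} - Tu. of_int (sf k a) * lam a b * of_int (sf k' b) = 0"
      proof
        fix b assume "b \<in> {..<n} - Tu"
        hence "sf k' b = 0" using supp[OF k(2)] by blast
        thus "of_int (sf k a) * lam a b * of_int (sf k' b) = 0" by simp
      qed
    qed (use Tu_sub in auto)
  qed simp
  show ?thesis by (simp only: y_def br_W_W eq)
qed

lemma conj_anti: "antisym_mat m (conj_mat n sf lam)"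
  unfolding antisym_mat_def conj_mat_def
proof (intro allI impI)
  fix i j
  have pt: "of_int (sf i a) * lam a b * of_int (sf j b) = - (of_int (sf j b) * lam b a * of_int (sf i a))"
    if "a < n" "b < n" for a b
  proof -
    have "lam a b = - lam b a" using that by (intro lam_anti)
    thus ?thesis by (simp add: algebra_simps)
  qed
  have "(\<Sum>a<n. \<Sum>b<n. of_int (sf i a) * lam a b * of_int (sf j b)) = (\<Sum>b<n. \<Sum>a<n. of_int (sf i a) * lam a b * of_int (sf j b))"
    by (rule sum.swap)
  also have "\<dots> = (\<Sum>b<n. \<Sum>a<n. - (of_int (sf j b) * lam b a * of_int (sf i a)))"
    by (rule sum.cong[OF refl], rule sum.cong[OF refl], rule pt) auto
  also have "\<dots> = - (\<Sum>b<n. \<Sum>a<n. of_int (sf j b) * lam b a * of_int (sf i a))"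
    by (simp add: sum_negf)
  finally show "(\<Sum>a<n. \<Sum>b<n. of_int (sf i a) * lam a b * of_int (sf j b)) = - (\<Sum>a<n. \<Sum>b<n. of_int (sf j a) * lam a b * of_int (sf i b))" .
qed

lemma GL_sf: "GL_int n sf"
proof -
  have "GL_int n s" using li unfolding linv_def by blast
  thus ?thesis unfolding sf_def by (rule GL_perm[OF _ pbij])
qed

end



context final begin

definition Lm where "Lm j mo = (\<Sum>k\<in>Poly_Mapping.keys mo. of_nat (Poly_Mapping.lookup mo k) * ell Tu lam (sf k) j)"

lemma mon_nz: "mon y mo \<noteq> 0"
  unfolding mon_def by (simp add: prod_zero_iff y_nz)

lemma ld_mon: "j < n \<Longrightarrow> ld (mon y mo) (u j) = emb (Lm j mo) * u j"
proof -
  assume j: "j < n"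
  have "ld (mon y mo) (u j) = (\<Sum>k\<in>Poly_Mapping.keys mo. ld (y k ^ Poly_Mapping.lookup mo k) (u j))"
    unfolding mon_def by (rule ld_prod) (simp add: y_nz)
  also have "\<dots> = (\<Sum>k\<in>Poly_Mapping.keys mo. of_nat (Poly_Mapping.lookup mo k) * (emb (ell Tu lam (sf k) j) * u j))"
    by (rule sum.cong[OF refl]) (simp add: ld_power W_nz y_def ld_W_u j)
  also have "\<dots> = emb (Lm j mo) * u j"
    unfolding Lm_def by (simp add: emb_sum emb_mult sum_distrib_right mult.assoc)
  finally show ?thesis .
qed

lemma br_term: "j < n \<Longrightarrow> c \<in> cen \<Longrightarrow> br (c * mon y mo) (u j) = emb (Lm j mo) * (c * mon y mo) * u j"
proof -
  assume j: "j < n" and c: "c \<in> cen"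
  have "br c (u j) = 0" using c unfolding cen_def by blast
  hence "br (c * mon y mo) (u j) = c * br (mon y mo) (u j)" by (simp add: leib)
  also have "\<dots> = c * (mon y mo * (emb (Lm j mo) * u j))" by (simp add: br_ld ld_mon j)
  finally show ?thesis by (simp add: mult_ac)
qed

lemma Lm_expand: "Poly_Mapping.keys mo \<subseteq> {..<m} \<Longrightarrow> Lm j mo = (\<Sum>k<m. of_nat (Poly_Mapping.lookup mo k) * ell Tu lam (sf k) j)"
  unfolding Lm_def by (rule sum.mono_neutral_left) (auto simp: in_keys_iff)

lemma Lm_sep:
  assumes "Poly_Mapping.keys mo0 \<subseteq> {..<m}" "Poly_Mapping.keys mo1 \<subseteq> {..<m}" "mo0 \<noteq> mo1"
  shows "\<exists>j\<in>Tu. Lm j mo0 \<noteq> Lm j mo1"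
proof (rule ccontr)
  assume "\<not> ?thesis"
  hence eq: "\<forall>j\<in>Tu. Lm j mo0 = Lm j mo1" by blast
  define c where "c k = int (Poly_Mapping.lookup mo0 k) - int (Poly_Mapping.lookup mo1 k)" for k
  have "\<forall>j\<in>Tu. (\<Sum>k<m. of_int (c k) * ell Tu lam (sf k) j) = 0"
  proof
    fix j assume "j \<in> Tu"
    have "(\<Sum>k<m. of_int (c k) * ell Tu lam (sf k) j) = Lm j mo0 - Lm j mo1"
      unfolding Lm_expand[OF assms(1)] Lm_expand[OF assms(2)] c_def
      by (simp add: sum_subtractf algebra_simps)
    thus "(\<Sum>k<m. of_int (c k) * ell Tu lam (sf k) j) = 0" using eq \<open>j \<in> Tu\<close> by simp
  qed
  hence c0: "k < m \<Longrightarrow> c k = 0" for k using lindep' by blast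
  have "mo0 = mo1"
  proof (rule poly_mapping_eqI)
    fix k show "Poly_Mapping.lookup mo0 k = Poly_Mapping.lookup mo1 k"
    proof (cases "k < m")
      case True thus ?thesis using c0[OF True] by (simp add: c_def)
    next
      case False
      hence "k \<notin> Poly_Mapping.keys mo0" "k \<notin> Poly_Mapping.keys mo1" using assms by auto
      thus ?thesis by (simp add: in_keys_iff)
    qed
  qed
  thus False using assms(3) by simp
qed

lemma cen_emb_diff: "emb a - emb b \<in> cen"
  using emb_cen[of "a - b"] by (simp add: emb_diff)

lemma indep_aux:
  "finite M \<Longrightarrow> M \<noteq> {} \<Longrightarrow> (\<forall>mo\<in>M. Poly_Mapping.keys mo \<subseteq> {..<m}) \<Longrightarrow> (\<forall>mo\<in>M. c mo \<in> cen \<and> c mo \<noteq> 0)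
   \<Longrightarrow> (\<Sum>mo\<in>M. c mo * mon y mo) \<noteq> 0"
proof (induction "card M" arbitrary: M c rule: less_induct)
  case less
  show ?case
  proof
    assume S0: "(\<Sum>mo\<in>M. c mo * mon y mo) = 0"
    obtain mo0 where mo0: "mo0 \<in> M" using less.prems(2) by blast
    show False
    proof (cases "M = {mo0}")
      case True
      thus False using S0 less.prems(4) mo0 mon_nz by simp
    next
      case False
      then obtain mo1 where mo1: "mo1 \<in> M" "mo1 \<noteq> mo0" using mo0 by blast
      obtain j where j: "j \<in> Tu" "Lm j mo0 \<noteq> Lm j mo1"
        using Lm_sep[of mo0 mo1] less.prems(3) mo0 mo1 by metis
      have jn: "j < n" "u j \<noteq> 0" using j by (auto simp: Tu_def)
      have "br (\<Sum>mo\<in>M. c mo * mon y mo) (u j) = (\<Sum>mo\<in>M. emb (Lm j mo) * (c mo * mon y mo) * u j)"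
        unfolding suml using less.prems(4) jn by (intro sum.cong refl br_term) auto
      hence "(\<Sum>mo\<in>M. emb (Lm j mo) * (c mo * mon y mo)) * u j = 0"
        using S0 by (simp add: sum_distrib_right)
      hence R1: "(\<Sum>mo\<in>M. emb (Lm j mo) * (c mo * mon y mo)) = 0" using jn by simp
      define e where "e mo = (emb (Lm j mo) - emb (Lm j mo0)) * c mo" for mo
      have R2: "(\<Sum>mo\<in>M. e mo * mon y mo) = 0"
      proof -
        have "(\<Sum>mo\<in>M. e mo * mon y mo) = (\<Sum>mo\<in>M. emb (Lm j mo) * (c mo * mon y mo)) - emb (Lm j mo0) * (\<Sum>mo\<in>M. c mo * mon y mo)"
          unfolding e_def by (simp add: sum_subtractf sum_distrib_left algebra_simps)
        thus ?thesis using R1 S0 by simp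
      qed
      define M' where "M' = {mo \<in> M. Lm j mo \<noteq> Lm j mo0}"
      have M'sub: "M' \<subset> M" using mo0 unfolding M'_def by auto
      have fM': "finite M'" using M'sub less.prems(1) finite_subset by blast
      have card': "card M' < card M" using psubset_card_mono[OF less.prems(1) M'sub] .
      have ne: "M' \<noteq> {}" using mo1 j unfolding M'_def by auto
      have "(\<Sum>mo\<in>M'. e mo * mon y mo) = (\<Sum>mo\<in>M. e mo * mon y mo)"
        by (rule sum.mono_neutral_left) (use less.prems(1) in \<open>auto simp: M'_def e_def\<close>)
      hence "(\<Sum>mo\<in>M'. e mo * mon y mo) = 0" using R2 by simp
      moreover have "(\<Sum>mo\<in>M'. e mo * mon y mo) \<noteq> 0"
      proof (rule less.hyps[OF card' fM' ne])
        show "\<forall>mo\<in>M'. Poly_Mapping.keys mo \<subseteq> {..<m}" using less.prems(3) M'sub by blast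
        show "\<forall>mo\<in>M'. e mo \<in> cen \<and> e mo \<noteq> 0"
        proof
          fix mo assume mo: "mo \<in> M'"
          have cm: "c mo \<in> cen" "c mo \<noteq> 0" using less.prems(4) mo M'sub by auto
          have "emb (Lm j mo) - emb (Lm j mo0) \<noteq> 0"
          proof
            assume "emb (Lm j mo) - emb (Lm j mo0) = 0"
            hence "emb (Lm j mo - Lm j mo0) = 0" by (simp add: emb_diff)
            hence "Lm j mo - Lm j mo0 = 0" by (rule emb_inj)
            hence "Lm j mo = Lm j mo0" by simp
            thus False using mo unfolding M'_def by simp
          qed
          moreover have "e mo \<in> cen" unfolding e_def using cen_emb_diff cm csub_cen unfolding csub_def by blast
          ultimately show "e mo \<in> cen \<and> e mo \<noteq> 0" using cm unfolding e_def by simp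
        qed
      qed
      ultimately show False by simp
    qed
  qed
qed

lemma indep: "pp \<in> polys_over cen m \<Longrightarrow> meval y pp = 0 \<Longrightarrow> pp = 0"
proof (rule ccontr)
  assume p: "pp \<in> polys_over cen m" and z: "meval y pp = 0" and nz: "pp \<noteq> 0"
  have "(\<Sum>mo\<in>Poly_Mapping.keys pp. Poly_Mapping.lookup pp mo * mon y mo) \<noteq> 0"
    using p nz by (intro indep_aux) (auto simp: polys_over_def polys_in_def in_keys_iff)
  thus False using z by (simp add: meval_mon)
qed

end



context final begin

definition FF where "FF = {z. \<exists>a\<in>polys_over cen m. \<exists>b\<in>polys_over cen m. meval y b \<noteq> 0 \<and> z = meval y a / meval y b}"

lemma cen1: "1 \<in> cen" and cen0: "0 \<in> cen" using csub_cen unfolding csub_def by auto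
lemma sfc: "subfield cen" by (rule subfield_cen)

lemma meval_one[simp]: "meval y 1 = 1" using meval_mconst[of y 1] by simp
lemma one_po: "1 \<in> polys_over cen m" using polys_over_mconst[OF sfc cen1, of m] by simp

lemma FF_const: "c \<in> cen \<Longrightarrow> c \<in> FF"
  unfolding FF_def
  by (rule CollectI, rule bexI[of _ "mconst c"], rule bexI[of _ "mconst 1"])
     (auto intro: polys_over_mconst sfc cen1 one_po)

lemma FF_y: "k < m \<Longrightarrow> y k \<in> FF"
  unfolding FF_def
  by (rule CollectI, rule bexI[of _ "mvar k"], rule bexI[of _ "mconst 1"])
     (auto intro: polys_over_mconst polys_over_mvar sfc cen1 one_po)

lemma csub_FF: "csub FF"
  unfolding csub_def
proof (intro conjI ballI)
  show "0 \<in> FF" using FF_const cen0 by blast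
  show "1 \<in> FF" using FF_const cen1 by blast
next
  fix z1 z2 assume "z1 \<in> FF" "z2 \<in> FF"
  then obtain a1 b1 a2 b2 where ab: "a1 \<in> polys_over cen m" "b1 \<in> polys_over cen m" "meval y b1 \<noteq> 0" "z1 = meval y a1 / meval y b1"
    "a2 \<in> polys_over cen m" "b2 \<in> polys_over cen m" "meval y b2 \<noteq> 0" "z2 = meval y a2 / meval y b2"
    unfolding FF_def by blast
  show "z1 + z2 \<in> FF" unfolding FF_def
  proof (rule CollectI, rule bexI[of _ "a1 * b2 + a2 * b1"], rule bexI[of _ "b1 * b2"])
    show "meval y (b1 * b2) \<noteq> 0 \<and> z1 + z2 = meval y (a1 * b2 + a2 * b1) / meval y (b1 * b2)"
      using ab(3,7) unfolding ab(4) ab(8) by (simp add: meval_add meval_mult field_simps)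
  qed (use ab in \<open>auto intro!: polys_over_add polys_over_mult sfc\<close>)
  show "z1 * z2 \<in> FF" unfolding FF_def
  proof (rule CollectI, rule bexI[of _ "a1 * a2"], rule bexI[of _ "b1 * b2"])
    show "meval y (b1 * b2) \<noteq> 0 \<and> z1 * z2 = meval y (a1 * a2) / meval y (b1 * b2)"
      using ab by (simp add: meval_mult)
  qed (use ab in \<open>auto intro!: polys_over_mult sfc\<close>)
next
  fix z assume "z \<in> FF"
  then obtain a b where ab: "a \<in> polys_over cen m" "b \<in> polys_over cen m" "meval y b \<noteq> 0" "z = meval y a / meval y b"
    unfolding FF_def by blast
  have m1: "- 1 \<in> cen" using csub_cen cen1 unfolding csub_def by blast
  show "- z \<in> FF" unfolding FF_def
  proof (rule CollectI, rule bexI[of _ "mconst (- 1) * a"], rule bexI[of _ "b"])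
    show "meval y b \<noteq> 0 \<and> - z = meval y (mconst (- 1) * a) / meval y b"
      using ab by (simp add: meval_mult)
  qed (use ab m1 in \<open>auto intro!: polys_over_mult polys_over_mconst sfc\<close>)
  show "inverse z \<in> FF"
  proof (cases "meval y a = 0")
    case True thus ?thesis using ab FF_const cen0 by simp
  next
    case False
    show ?thesis unfolding FF_def
    proof (rule CollectI, rule bexI[of _ "b"], rule bexI[of _ "a"])
      show "meval y a \<noteq> 0 \<and> inverse z = meval y b / meval y a" using ab False by simp
    qed (use ab in auto)
  qed
qed

lemma W_FF: "r < n \<Longrightarrow> W (s r) \<in> FF"
proof (cases "r \<in> A")
  case True
  then obtain k where k: "k < m" "r = p k" using pim unfolding m_def by blast
  thus ?thesis using FF_y[OF k(1)] unfolding y_def sf_def by simp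
next
  case False
  assume r: "r < n"
  have "W (s r) \<in> cen" using li False r unfolding linv_def by (intro W_central) blast
  thus ?thesis by (rule FF_const)
qed

lemma u_expr: "i \<in> Tu \<Longrightarrow> \<exists>t. u i = (\<Prod>r<n. W (s r) powi t r)"
proof -
  assume i: "i \<in> Tu"
  have iN: "i < n" using i by (simp add: Tu_def)
  obtain t where t: "\<And>i j. i < n \<Longrightarrow> j < n \<Longrightarrow> (\<Sum>l<n. t i l * s l j) = (if i = j then 1 else 0)"
  proof -
    have "GL_int n s" using li unfolding linv_def by blast
    thus ?thesis using that unfolding GL_int_def by blast
  qed
  have unz: "j \<in> Tu \<Longrightarrow> u j \<noteq> 0" for j by (simp add: Tu_def)
  have "u i = (\<Prod>j\<in>Tu. if j = i then u j else 1)" using i by (simp add: prod.delta)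
  also have "\<dots> = (\<Prod>j\<in>Tu. u j powi (\<Sum>l<n. t i l * s l j))"
  proof (rule prod.cong[OF refl])
    fix j assume j: "j \<in> Tu"
    hence jn: "j < n" by (simp add: Tu_def)
    show "(if j = i then u j else 1) = u j powi (\<Sum>l<n. t i l * s l j)"
      by (simp add: t[OF iN jn])
  qed
  also have "\<dots> = (\<Prod>j\<in>Tu. \<Prod>l<n. u j powi (t i l * s l j))"
  proof (rule prod.cong[OF refl])
    fix j assume j: "j \<in> Tu"
    show "u j powi (\<Sum>l<n. t i l * s l j) = (\<Prod>l<n. u j powi (t i l * s l j))"
      by (rule powi_sum[symmetric]) (rule unz[OF j])
  qed
  also have "\<dots> = (\<Prod>l<n. \<Prod>j\<in>Tu. u j powi (t i l * s l j))"
    by (rule prod.swap)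
  also have "\<dots> = (\<Prod>l<n. \<Prod>j\<in>Tu. u j powi (s l j * t i l))"
    by (simp only: mult.commute[of "t i _"])
  also have "\<dots> = (\<Prod>l<n. W (s l) powi t i l)"
    unfolding W_def by (simp only: power_int_mult prod_powi)
  finally show ?thesis by blast
qed

lemma FF_all: "z \<in> FF"
proof (rule EV[OF csub_FF])
  fix c show "emb c \<in> FF" using FF_const emb_cen by blast
next
  fix i assume i: "i < n"
  show "u i \<in> FF"
  proof (cases "u i = 0")
    case True thus ?thesis using FF_const cen0 by simp
  next
    case False
    hence "i \<in> Tu" using i by (simp add: Tu_def)
    then obtain t where t: "u i = (\<Prod>r<n. W (s r) powi t r)" using u_expr by blast
    show ?thesis unfolding t
      by (intro csub_prod[OF csub_FF] csub_powi[OF csub_FF] W_FF) auto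
  qed
qed

lemma qrf: "is_quantum_rat_field emb br m (conj_mat n sf lam)"
  unfolding is_quantum_rat_field_def
proof (rule exI[of _ cen], rule exI[of _ y], intro conjI)
  show "subfield cen" by (rule sfc)
  show "range emb \<subseteq> cen" using emb_cen by blast
  show "\<forall>a\<in>cen. \<forall>z. br a z = 0" unfolding cen_def by blast
  show "\<forall>pp\<in>polys_over cen m. meval y pp = 0 \<longrightarrow> pp = 0" using indep by blast
  show "\<forall>z. \<exists>pp\<in>polys_over cen m. \<exists>q\<in>polys_over cen m. meval y q \<noteq> 0 \<and> z = meval y pp / meval y q"
    using FF_all unfolding FF_def by blast
  show "\<forall>i<m. \<forall>j<m. br (y i) (y j) = emb (conj_mat n sf lam i j) * y i * y j"
    using br_y by blast
qed

end

context setting begin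

lemma main: "\<exists>m s. m \<le> n \<and> GL_int n s \<and> antisym_mat m (conj_mat n s lam)
           \<and> is_quantum_rat_field (\<lambda>c. phi (mconst c)) br m (conj_mat n s lam)"
proof -
  obtain s A where sA: "linv n Tu lam s A" "lindep Tu lam s A" using lattice[OF Tu_sub] by blast
  have "A \<subseteq> {..<n}" using sA unfolding linv_def by blast
  then obtain p where p: "bij_betw p {..<n} {..<n}" "p ` {..<card A} = A" using perm_exists by blast
  interpret F: final n lam P phi br s A p
    by unfold_locales (use sA p in auto)
  have e: "(\<lambda>c. phi (mconst c)) = emb" by (simp add: fun_eq_iff emb_def)
  show ?thesis unfolding e
    using F.m_le F.GL_sf F.conj_anti F.qrf by blast
qed

end



theorem theorem3p4:
  fixes n :: nat
    and lam :: "nat \<Rightarrow> nat \<Rightarrow> 'k::field_char_0"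
    and P :: "'k mpoly set"
    and phi :: "'k mpoly \<Rightarrow> 'f::field"
    and br :: "'f \<Rightarrow> 'f \<Rightarrow> 'f"
  assumes "antisym_mat n lam"
    and "poisson_prime n lam P"
    and "is_poisson_fract_quot n lam P phi br"
  shows "\<exists>m s. m \<le> n \<and> GL_int n s \<and> antisym_mat m (conj_mat n s lam)
           \<and> is_quantum_rat_field (\<lambda>c. phi (mconst c)) br m (conj_mat n s lam)"
proof -
  interpret S: setting n lam P phi br using assms(1,3) by unfold_locales
  show ?thesis by (rule S.main)
qed

end
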